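(* Let $E$ be a real topological vector space, $\Omega$ a nonempty open subset of $E$, and $f_0,\dots,f_m:\Omega\to\mathbb{R}$ functions. Let $\hat{x}$ be a solution of the problem $$(\mathcal{Q}_1)\qquad \min f_0(x)\quad\text{subject to } x\in\Omega,\ f_i(x)\le0\ \text{for all } i\in\{1,\dots,m\}.$$ Assume: (a) for every $j\in\{i\in\{1,\dots,m\}:f_i(\hat{x})<0\}$, $f_j$ is upper semicontinuous at $\hat{x}$; (b) for every $i\in\{0,\dots,m\}$, $f_i$ is $D^+_M$-differentiable at $\hat{x}$. Then there exist $\lambda^0,\dots,\lambda^m\in\mathbb{R}_+$ such that: (i) $(\lambda^0,\dots,\lambda^m)\neq(0,\dots,0)$; (ii) $\lambda^if_i(\hat{x})=0$ for all $i\in\{1,\dots,m\}$; (iii) $\sum_{i=0}^m\lambda^iD^+_Mf_i(\hat{x})(u)\ge0$ for all $u\in E$. If, in addition, (c) there exists $w\in E$ such that $D^+_Mf_i(\hat{x})(w)<0$ for every $i\in\{1,\dots,m\}$ with $f_i(\hat{x})=0$, then one can take $\lambda^0=1$.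
   Context: For a function $f$ defined on an open set containing $x$ and $u\in E$, the upper Dini derivative is $D^+f(x)(u):=\limsup_{t\to0^+}\frac{f(x+tu)-f(x)}{t}$, with the convention $D^+f(x)(0)=0$. The modified upper Dini derivative is $D^+_Mf(x)(u):=\sup_{w\in E}\{D^+f(x)(u+w)-D^+f(x)(w)\}$. The function $f$ is $D^+_M$-differentiable at $x$ if $D^+_Mf(x)(u)$ and $D^+f(x)(u)$ are finite for every $u\in E$. *)

theory Defs
  imports "HOL-Analysis.Analysis"
begin

definition dini_upper :: "('a::real_vector \<Rightarrow> real) \<Rightarrow> 'a \<Rightarrow> 'a \<Rightarrow> ereal" where
  "dini_upper f x u =
     (if u = 0 then 0
      else Limsup (at_right (0::real)) (\<lambda>t. ereal ((f (x + t *\<^sub>R u) - f x) / t)))"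

definition dini_upper_M :: "('a::real_vector \<Rightarrow> real) \<Rightarrow> 'a \<Rightarrow> 'a \<Rightarrow> ereal" where
  "dini_upper_M f x u = (SUP w. dini_upper f x (u + w) - dini_upper f x w)"

definition dini_M_differentiable :: "('a::real_vector \<Rightarrow> real) \<Rightarrow> 'a \<Rightarrow> bool" where
  "dini_M_differentiable f x \<longleftrightarrow>
     (\<forall>u. \<bar>dini_upper_M f x u\<bar> \<noteq> \<infinity> \<and> \<bar>dini_upper f x u\<bar> \<noteq> \<infinity>)"

definition usc_at_within :: "('a::topological_space \<Rightarrow> real) \<Rightarrow> 'a \<Rightarrow> 'a set \<Rightarrow> bool" where
  "usc_at_within f x S \<longleftrightarrow> (\<forall>e>0. \<forall>\<^sub>F y in at x within S. f y < f x + e)"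

end

theory Submission
  imports Defs
begin


definition sublin :: "('a::real_vector \<Rightarrow> real) \<Rightarrow> bool" where
  "sublin p \<longleftrightarrow> (\<forall>u v. p (u + v) \<le> p u + p v) \<and> (\<forall>t>0. \<forall>u. p (t *\<^sub>R u) \<le> t * p u)"

lemma sublin_comb:
  assumes "sublin p" "a > 0" "b > 0"
  shows "p (a *\<^sub>R u + b *\<^sub>R v) \<le> a * p u + b * p v"
proof -
  have "p (a *\<^sub>R u + b *\<^sub>R v) \<le> p (a *\<^sub>R u) + p (b *\<^sub>R v)" using assms unfolding sublin_def by blast
  also have "\<dots> \<le> a * p u + b * p v" using assms unfolding sublin_def by (meson add_mono)
  finally show ?thesis .
qed

lemma gordan2:
  assumes p: "sublin p" and q: "sublin q" and h: "\<And>u. max (p u) (q u) \<ge> 0"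
  shows "\<exists>a b. a \<ge> 0 \<and> b \<ge> 0 \<and> (a > 0 \<or> b > 0) \<and> (\<forall>u. a * p u + b * q u \<ge> 0)"
proof (cases "\<forall>u. q u \<ge> 0")
  case True
  then show ?thesis by (intro exI[of _ 0] exI[of _ 1]) auto
next
  case False
  then obtain v0 where v0: "q v0 < 0" by (auto simp: not_le)
  have claim: "p u \<ge> 0" if "q u \<le> 0" for u
  proof (rule ccontr)
    assume pu: "\<not> p u \<ge> 0"
    define e where "e = - p u / (2 * (\<bar>p v0\<bar> + 1))"
    have e: "e > 0" unfolding e_def by (rule divide_pos_pos) (use pu in auto)
    have "e * p v0 \<le> e * \<bar>p v0\<bar>" using e by (simp add: mult_left_mono)
    also have "\<dots> < - p u"
    proof -
      have "e * \<bar>p v0\<bar> = (- p u / 2) * (\<bar>p v0\<bar> / (\<bar>p v0\<bar> + 1))" unfolding e_def by (simp add: field_simps)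
      also have "\<dots> \<le> (- p u / 2) * 1" using pu by (intro mult_left_mono) auto
      finally show ?thesis using pu by linarith
    qed
    finally have e2: "e * p v0 < - p u" .
    have "p (1 *\<^sub>R u + e *\<^sub>R v0) \<le> 1 * p u + e * p v0" by (rule sublin_comb[OF p]) (use e in auto)
    moreover have "q (1 *\<^sub>R u + e *\<^sub>R v0) \<le> 1 * q u + e * q v0" by (rule sublin_comb[OF q]) (use e in auto)
    moreover have "e * q v0 < 0" using e v0 by (simp add: mult_pos_neg)
    ultimately show False using h[of "1 *\<^sub>R u + e *\<^sub>R v0"] e2 that by linarith
  qed
  show ?thesis
  proof (cases "\<forall>u. q u \<le> 0")
    case True
    then show ?thesis using claim by (intro exI[of _ 1] exI[of _ 0]) auto
  next
    case False
    then obtain u1 where u1: "q u1 > 0" by (auto simp: not_le)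
    define S where "S = (\<lambda>u. - p u / q u) ` {u. q u > 0}"
    have key: "- p u / q u \<le> p v / (- q v)" if "q u > 0" "q v < 0" for u v
    proof -
      have "(- q v) * p u + q u * p v \<ge> 0"
      proof (rule ccontr)
        assume "\<not> ?thesis"
        moreover have "p ((- q v) *\<^sub>R u + q u *\<^sub>R v) \<le> (- q v) * p u + q u * p v"
          by (rule sublin_comb[OF p]) (use that in auto)
        moreover have "q ((- q v) *\<^sub>R u + q u *\<^sub>R v) \<le> (- q v) * q u + q u * q v"
          by (rule sublin_comb[OF q]) (use that in auto)
        ultimately show False using claim[of "(- q v) *\<^sub>R u + q u *\<^sub>R v"]
          by (simp add: algebra_simps)
      qed
      then show ?thesis using that by (simp add: field_simps)
    qed
    have Sne: "S \<noteq> {}" using u1 by (auto simp: S_def)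
    have Sbdd: "bdd_above S" unfolding S_def bdd_above_def using key v0 by blast
    define t where "t = max (Sup S) 0"
    have t0: "t \<ge> 0" by (simp add: t_def)
    have tS: "- p u / q u \<le> t" if "q u > 0" for u
    proof -
      have "- p u / q u \<in> S" using that by (auto simp: S_def)
      then have "- p u / q u \<le> Sup S" using Sbdd by (rule cSup_upper)
      then show ?thesis by (simp add: t_def)
    qed
    have tT: "t \<le> p v / (- q v)" if "q v < 0" for v
    proof -
      have "Sup S \<le> p v / (- q v)" using Sne by (rule cSup_least) (use key that in \<open>auto simp: S_def\<close>)
      moreover have "0 \<le> p v / (- q v)" using claim[of v] that by (simp add: divide_nonneg_neg)
      ultimately show ?thesis by (simp add: t_def)
    qed
    have "1 * p u + t * q u \<ge> 0" for u
    proof -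
      consider "q u > 0" | "q u < 0" | "q u = 0" by linarith
      then show ?thesis
      proof cases
        case 1 then show ?thesis using tS[of u] by (simp add: field_simps)
      next
        case 2 then show ?thesis using tT[of u] by (simp add: field_simps)
      next
        case 3 then show ?thesis using claim[of u] by simp
      qed
    qed
    then show ?thesis using t0 by (intro exI[of _ 1] exI[of _ t]) auto
  qed
qed
lemma gordan:
  assumes "finite K" "K \<noteq> {}"
  shows "(\<forall>k\<in>K. sublin (p k)) \<Longrightarrow> (\<forall>u. \<exists>k\<in>K. p k u \<ge> 0) \<Longrightarrow>
    \<exists>lam. (\<forall>k\<in>K. lam k \<ge> 0) \<and> (\<exists>k\<in>K. lam k > 0) \<and> (\<forall>u. (\<Sum>k\<in>K. lam k * p k u) \<ge> 0)"
  using assms(1,2)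
proof (induction K arbitrary: p rule: finite_ne_induct)
  case (singleton x)
  then show ?case by (intro exI[of _ "\<lambda>_. 1"]) auto
next
  case (insert k K)
  define q where "q u = Max ((\<lambda>j. p j u) ` K)" for u
  have qge: "p j u \<le> q u" if "j \<in> K" for j u
    unfolding q_def using insert.hyps that by (intro Max_ge) auto
  have qin: "\<exists>j\<in>K. q u = p j u" for u
    proof -
    have "q u \<in> (\<lambda>j. p j u) ` K" unfolding q_def using insert.hyps by (intro Max_in) auto
    then show ?thesis by auto
  qed
  have sK: "sublin (p j)" if "j \<in> K" for j using insert.prems that by auto
  have sk: "sublin (p k)" using insert.prems by auto
  have sq: "sublin q"
    unfolding sublin_def
  proof (intro conjI allI impI)
    fix u v
    obtain j where j: "j \<in> K" "q (u + v) = p j (u + v)" using qin by blast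
    have "p j (u + v) \<le> p j u + p j v" using sK[OF j(1)] unfolding sublin_def by blast
    then show "q (u + v) \<le> q u + q v" using j qge[OF j(1), of u] qge[OF j(1), of v] by linarith
  next
    fix t :: real and u assume t: "t > 0"
    obtain j where j: "j \<in> K" "q (t *\<^sub>R u) = p j (t *\<^sub>R u)" using qin by blast
    have "p j (t *\<^sub>R u) \<le> t * p j u" using sK[OF j(1)] t unfolding sublin_def by blast
    also have "\<dots> \<le> t * q u" using qge[OF j(1)] t by (simp add: mult_left_mono)
    finally show "q (t *\<^sub>R u) \<le> t * q u" using j by simp
  qed
  have "max (q u) (p k u) \<ge> 0" for u
  proof -
    obtain j where "j \<in> insert k K" "p j u \<ge> 0" using insert.prems by blast
    then show ?thesis using qge[of j u] by auto
  qed
  then obtain a b where ab: "a \<ge> 0" "b \<ge> 0" "a > 0 \<or> b > 0" "\<And>u. a * q u + b * p k u \<ge> 0"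
    using gordan2[OF sq sk] by blast
  show ?case
  proof (cases "a = 0")
    case True
    then have b: "b > 0" using ab by auto
    have "(\<Sum>j\<in>insert k K. (if j = k then b else 0) * p j u) = b * p k u" for u
      using insert.hyps by (simp, intro sum.neutral) auto
    then show ?thesis using b ab(4) True
      by (intro exI[of _ "\<lambda>j. if j = k then b else 0"]) auto
  next
    case False
    then have a: "a > 0" using ab by auto
    define c where "c = b / a"
    have c: "c \<ge> 0" using ab a by (simp add: c_def)
    have qc: "q u + c * p k u \<ge> 0" for u
    proof -
      have ac: "a * c = b" using a by (simp add: c_def)
      have "a * (q u + c * p k u) = a * q u + (a * c) * p k u" by (simp add: algebra_simps)
      then have "a * (q u + c * p k u) \<ge> 0" using ab(4)[of u] ac by simp
      then show ?thesis using a by (simp add: zero_le_mult_iff)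
    qed
    define r where "r j u = p j u + c * p k u" for j u
    have sr: "\<forall>j\<in>K. sublin (r j)"
    proof
      fix j assume j: "j \<in> K"
      show "sublin (r j)" unfolding sublin_def r_def
      proof (intro conjI allI impI)
        fix u v
        have "p j (u + v) \<le> p j u + p j v" "p k (u + v) \<le> p k u + p k v"
          using sK[OF j] sk unfolding sublin_def by blast+
        moreover have "c * p k (u + v) \<le> c * (p k u + p k v)" using calculation(2) c by (rule mult_left_mono)
        ultimately show "p j (u + v) + c * p k (u + v) \<le> p j u + c * p k u + (p j v + c * p k v)"
          by (simp add: algebra_simps)
      next
        fix t :: real and u assume t: "t > 0"
        have "p j (t *\<^sub>R u) \<le> t * p j u" "p k (t *\<^sub>R u) \<le> t * p k u"
          using sK[OF j] sk t unfolding sublin_def by blast+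
        moreover have "c * p k (t *\<^sub>R u) \<le> c * (t * p k u)" using calculation(2) c by (rule mult_left_mono)
        ultimately show "p j (t *\<^sub>R u) + c * p k (t *\<^sub>R u) \<le> t * (p j u + c * p k u)"
          by (simp add: algebra_simps)
      qed
    qed
    have hr: "\<forall>u. \<exists>j\<in>K. r j u \<ge> 0"
    proof
      fix u
      obtain j where "j \<in> K" "q u = p j u" using qin by blast
      then show "\<exists>j\<in>K. r j u \<ge> 0" using qc[of u] by (auto simp: r_def)
    qed
    obtain mu where mu: "\<forall>j\<in>K. mu j \<ge> 0" "\<exists>j\<in>K. mu j > 0" "\<forall>u. (\<Sum>j\<in>K. mu j * r j u) \<ge> 0"
      using insert.IH[OF sr hr] by blast
    define lam where "lam j = (if j = k then c * sum mu K else mu j)" for j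
    have "(\<Sum>j\<in>insert k K. lam j * p j u) = (\<Sum>j\<in>K. mu j * r j u)" for u
    proof -
      have "(\<Sum>j\<in>insert k K. lam j * p j u) = c * sum mu K * p k u + (\<Sum>j\<in>K. mu j * p j u)"
        using insert.hyps by (simp add: lam_def) (intro sum.cong, auto)
      also have "\<dots> = (\<Sum>j\<in>K. mu j * r j u)"
        by (simp add: r_def algebra_simps sum.distrib sum_distrib_left sum_distrib_right)
      finally show ?thesis .
    qed
    moreover have "\<forall>j\<in>insert k K. lam j \<ge> 0"
      using mu(1) c insert.hyps by (auto simp: lam_def intro!: mult_nonneg_nonneg sum_nonneg)
    moreover have "\<exists>j\<in>insert k K. lam j > 0"
      using mu(2) insert.hyps by (auto simp: lam_def)
    ultimately show ?thesis using mu(3) by (intro exI[of _ lam]) auto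
  qed
qed


lemma dini_scale:
  fixes f :: "'a::real_vector \<Rightarrow> real"
  assumes t: "t > 0"
  shows "dini_upper f x (t *\<^sub>R u) = ereal t * dini_upper f x u"
proof (cases "u = 0")
  case True then show ?thesis by (simp add: dini_upper_def)
next
  case False
  define h where "h s = ereal ((f (x + s *\<^sub>R u) - f x) / s)" for s
  have "dini_upper f x (t *\<^sub>R u) = Limsup (at_right 0) (\<lambda>s. ereal t * h (t * s))"
  proof -
    have "t *\<^sub>R u \<noteq> 0" using False t by simp
    moreover have "Limsup (at_right 0) (\<lambda>s. ereal ((f (x + s *\<^sub>R (t *\<^sub>R u)) - f x) / s))
       = Limsup (at_right 0) (\<lambda>s. ereal t * h (t * s))"
    proof (rule Limsup_eq, rule eventually_at_rightI[of 0 1])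
      fix s :: real assume s: "s \<in> {0<..<1}"
      show "ereal ((f (x + s *\<^sub>R (t *\<^sub>R u)) - f x) / s) = ereal t * h (t * s)"
        using s t by (simp add: h_def field_simps)
    qed simp
    ultimately show ?thesis by (simp add: dini_upper_def)
  qed
  also have "\<dots> = ereal t * Limsup (at_right 0) (\<lambda>s. h (t * s))"
    using t by (intro Limsup_ereal_mult_left) auto
  also have "Limsup (at_right 0) (\<lambda>s. h (t * s)) = Limsup (filtermap (times t) (at_right 0)) h"
    by (rule Limsup_filtermap_eq[symmetric]) (use t in \<open>auto simp: inj_def\<close>)
  also have "filtermap (times t) (at_right 0) = at_right (0::real)"
    using filtermap_times_pos_at_right[OF t, of 0] by simp
  finally show ?thesis using False by (simp add: dini_upper_def h_def)
qed

lemma dini_M_props: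
  fixes f :: "'a::real_vector \<Rightarrow> real"
  assumes fin: "dini_M_differentiable f x"
  defines "P \<equiv> \<lambda>u. real_of_ereal (dini_upper_M f x u)"
  defines "d \<equiv> \<lambda>u. real_of_ereal (dini_upper f x u)"
  shows "sublin P" "\<And>u. d u \<le> P u" "\<And>u. dini_upper_M f x u = ereal (P u)"
    "\<And>u. dini_upper f x u = ereal (d u)"
proof -
  have D: "dini_upper f x u = ereal (d u)" for u
    using fin unfolding dini_M_differentiable_def d_def by (metis ereal_real')
  have DM: "dini_upper_M f x u = ereal (P u)" for u
    using fin unfolding dini_M_differentiable_def P_def by (metis ereal_real')
  have DMs: "dini_upper_M f x u = (SUP w. ereal (d (u + w) - d w))" for u
    unfolding dini_upper_M_def D by simp
  have up: "d (u + w) - d w \<le> P u" for u w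
  proof -
    have "ereal (d (u + w) - d w) \<le> dini_upper_M f x u" unfolding DMs by (rule SUP_upper) simp
    then show ?thesis unfolding DM by simp
  qed
  have d0: "d 0 = 0" unfolding d_def dini_upper_def by simp
  have ds: "d (t *\<^sub>R u) = t * d u" if "t > 0" for t u
    using dini_scale[OF that, of f x u] unfolding D by simp
  show "d u \<le> P u" for u using up[of u 0] d0 by simp
  show "dini_upper_M f x u = ereal (P u)" for u by (rule DM)
  show "dini_upper f x u = ereal (d u)" for u by (rule D)
  show "sublin P" unfolding sublin_def
  proof (intro conjI allI impI)
    fix u v
    have "dini_upper_M f x (u + v) \<le> ereal (P u + P v)"
      unfolding DMs
    proof (rule SUP_least)
      fix w
      have "d (u + v + w) - d w = (d (u + (v + w)) - d (v + w)) + (d (v + w) - d w)"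
        by (simp add: add.assoc)
      also have "\<dots> \<le> P u + P v" using up[of u "v + w"] up[of v w] by linarith
      finally show "ereal (d (u + v + w) - d w) \<le> ereal (P u + P v)" by simp
    qed
    then show "P (u + v) \<le> P u + P v" unfolding DM by simp
  next
    fix t :: real and u assume t: "t > 0"
    have "dini_upper_M f x (t *\<^sub>R u) \<le> ereal (t * P u)"
      unfolding DMs
    proof (rule SUP_least)
      fix w
      have e: "t *\<^sub>R u + w = t *\<^sub>R (u + (1/t) *\<^sub>R w)" "w = t *\<^sub>R ((1/t) *\<^sub>R w)"
        using t by (simp_all add: scaleR_add_right)
      have "d (t *\<^sub>R u + w) - d w = t * (d (u + (1/t) *\<^sub>R w) - d ((1/t) *\<^sub>R w))"
        using e ds[OF t] by (metis right_diff_distrib)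
      also have "\<dots> \<le> t * P u" using up[of u "(1/t) *\<^sub>R w"] t by (simp add: mult_left_mono)
      finally show "ereal (d (t *\<^sub>R u + w) - d w) \<le> ereal (t * P u)" by simp
    qed
    then show "P (t *\<^sub>R u) \<le> t * P u" unfolding DM by simp
  qed
qed



lemma descent:
  fixes f :: "'a::real_vector \<Rightarrow> real"
  assumes "dini_upper f x u < 0" "u \<noteq> 0"
  shows "\<forall>\<^sub>F s in at_right 0. f (x + s *\<^sub>R u) < f x"
proof -
  have "\<forall>\<^sub>F s in at_right 0. ereal ((f (x + s *\<^sub>R u) - f x) / s) < 0"
    using assms by (intro Limsup_lessD) (simp add: dini_upper_def)
  moreover have "\<forall>\<^sub>F s in at_right (0::real). s > 0" by (simp add: eventually_at_right_less)
  ultimately show ?thesis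
    by eventually_elim (simp add: divide_less_0_iff)
qed

lemma path_tendsto:
  fixes xhat u :: "'a::{real_vector, topological_space}"
  assumes tvs_add: "continuous_on UNIV (\<lambda>p::'a \<times> 'a. fst p + snd p)"
    and tvs_scale: "continuous_on UNIV (\<lambda>p::real \<times> 'a. fst p *\<^sub>R snd p)"
  shows "((\<lambda>s. xhat + s *\<^sub>R u) \<longlongrightarrow> xhat) (at_right 0)"
proof -
  have c1: "continuous_on UNIV (\<lambda>s::real. s *\<^sub>R u)"
    using continuous_on_compose[OF continuous_on_Pair[OF continuous_on_id continuous_on_const] tvs_scale[THEN continuous_on_subset]]
    by (simp add: o_def)
  have c2: "continuous_on UNIV (\<lambda>s::real. xhat + s *\<^sub>R u)"
    using continuous_on_compose[OF continuous_on_Pair[OF continuous_on_const c1] tvs_add[THEN continuous_on_subset]]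
    by (simp add: o_def)
  then have "isCont (\<lambda>s::real. xhat + s *\<^sub>R u) 0" by (simp add: continuous_on_eq_continuous_at)
  then have "((\<lambda>s. xhat + s *\<^sub>R u) \<longlongrightarrow> xhat) (at 0)" by (simp add: isCont_def)
  then show ?thesis by (rule tendsto_mono[rotated]) (simp add: at_le)
qed



theorem theorem3p1:
  fixes f :: "nat \<Rightarrow> 'a::{real_vector, topological_space} \<Rightarrow> real"
    and \<Omega> :: "'a set" and xhat :: 'a and m :: nat
  assumes tvs_add: "continuous_on UNIV (\<lambda>p::'a \<times> 'a. fst p + snd p)"
    and tvs_scale: "continuous_on UNIV (\<lambda>p::real \<times> 'a. fst p *\<^sub>R snd p)"
    and open_\<Omega>: "open \<Omega>" and ne_\<Omega>: "\<Omega> \<noteq> {}"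
    and feas: "xhat \<in> \<Omega>" "\<forall>i\<in>{1..m}. f i xhat \<le> 0"
    and opt: "\<forall>x\<in>\<Omega>. (\<forall>i\<in>{1..m}. f i x \<le> 0) \<longrightarrow> f 0 xhat \<le> f 0 x"
    and a: "\<forall>j\<in>{1..m}. f j xhat < 0 \<longrightarrow> usc_at_within (f j) xhat \<Omega>"
    and b: "\<forall>i\<le>m. dini_M_differentiable (f i) xhat"
  shows "(\<exists>lam :: nat \<Rightarrow> real.
            (\<forall>i\<le>m. lam i \<ge> 0) \<and> (\<exists>i\<le>m. lam i \<noteq> 0) \<and>
            (\<forall>i\<in>{1..m}. lam i * f i xhat = 0) \<and>
            (\<forall>u. (\<Sum>i\<le>m. ereal (lam i) * dini_upper_M (f i) xhat u) \<ge> 0))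
       \<and> ((\<exists>w. \<forall>i\<in>{1..m}. f i xhat = 0 \<longrightarrow> dini_upper_M (f i) xhat w < 0) \<longrightarrow>
          (\<exists>lam :: nat \<Rightarrow> real. lam 0 = 1 \<and>
            (\<forall>i\<le>m. lam i \<ge> 0) \<and> (\<exists>i\<le>m. lam i \<noteq> 0) \<and>
            (\<forall>i\<in>{1..m}. lam i * f i xhat = 0) \<and>
            (\<forall>u. (\<Sum>i\<le>m. ereal (lam i) * dini_upper_M (f i) xhat u) \<ge> 0)))"
proof -
  define P where "P i u = real_of_ereal (dini_upper_M (f i) xhat u)" for i u
  define d where "d i u = real_of_ereal (dini_upper (f i) xhat u)" for i u
  have sP: "sublin (P i)" and dP: "d i u \<le> P i u" and DM: "dini_upper_M (f i) xhat u = ereal (P i u)"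
    and D: "dini_upper (f i) xhat u = ereal (d i u)" if "i \<le> m" for i u
    using dini_M_props[of "f i" xhat] b that unfolding P_def d_def by auto
  define A where "A = {i\<in>{1..m}. f i xhat = 0}"
  define K where "K = insert 0 A"
  have K: "finite K" "K \<noteq> {}" "K \<subseteq> {..m}" by (auto simp: K_def A_def)
  have noneg: "\<exists>k\<in>K. P k u \<ge> 0" for u
  proof (rule ccontr)
    assume "\<not> ?thesis"
    then have neg: "\<forall>k\<in>K. P k u < 0" by auto
    have dneg: "dini_upper (f k) xhat u < 0" if "k \<in> K" for k
    proof -
      have "k \<le> m" using that K(3) by auto
      then show ?thesis using neg that dP[of k u] D[of k u] by auto
    qed
    have u0: "u \<noteq> 0"
    proof
      assume "u = 0"
      then have "dini_upper (f 0) xhat u = 0" by (simp add: dini_upper_def)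
      then show False using dneg[of 0] by (simp add: K_def)
    qed
    define g where "g s = xhat + s *\<^sub>R u" for s
    have gt: "(g \<longlongrightarrow> xhat) (at_right 0)"
      unfolding g_def by (rule path_tendsto[OF tvs_add tvs_scale])
    have ev1: "\<forall>\<^sub>F s in at_right 0. \<forall>k\<in>K. f k (g s) < f k xhat"
      using K(1) by (intro eventually_ball_finite) (auto simp: g_def intro!: descent dneg u0)
    have ev2: "\<forall>\<^sub>F s in at_right 0. g s \<in> \<Omega>"
      using gt open_\<Omega> feas(1) by (rule topological_tendstoD)
    have ev3: "\<forall>\<^sub>F s in at_right 0. \<forall>j\<in>{1..m} - A. f j (g s) < 0"
    proof (intro eventually_ball_finite ballI)
      fix j assume j: "j \<in> {1..m} - A"
      then have fj: "f j xhat < 0" using feas(2) by (force simp: A_def)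
      then have "usc_at_within (f j) xhat \<Omega>" using a j by auto
      then have "\<forall>\<^sub>F y in at xhat within \<Omega>. f j y < f j xhat + (- f j xhat)"
        unfolding usc_at_within_def using fj by (meson neg_0_less_iff_less)
      then obtain S where S: "open S" "xhat \<in> S" "\<And>y. y \<in> S \<Longrightarrow> y \<noteq> xhat \<Longrightarrow> y \<in> \<Omega> \<Longrightarrow> f j y < 0"
        unfolding eventually_at_topological by auto
      have "\<forall>\<^sub>F s in at_right 0. g s \<in> S" using gt S(1,2) by (rule topological_tendstoD)
      moreover have "\<forall>\<^sub>F s in at_right (0::real). s > 0" by (simp add: eventually_at_right_less)
      ultimately show "\<forall>\<^sub>F s in at_right 0. f j (g s) < 0" using ev2
        by eventually_elim (use S(3) u0 in \<open>auto simp: g_def\<close>)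
    qed simp
    obtain s where s: "\<forall>k\<in>K. f k (g s) < f k xhat" "g s \<in> \<Omega>" "\<forall>j\<in>{1..m} - A. f j (g s) < 0"
      using eventually_happens[OF eventually_conj[OF ev1 eventually_conj[OF ev2 ev3]]] by auto
    have "\<forall>i\<in>{1..m}. f i (g s) \<le> 0"
    proof
      fix i assume i: "i \<in> {1..m}"
      show "f i (g s) \<le> 0"
      proof (cases "i \<in> A")
        case True
        then have "f i (g s) < f i xhat" "f i xhat = 0" using s(1) by (auto simp: K_def A_def)
        then show ?thesis by simp
      next
        case False
        then have "i \<in> {1..m} - A" using i by blast
        then have "f i (g s) < 0" using s(3) by blast
        then show ?thesis by simp
      qed
    qed
    then have "f 0 xhat \<le> f 0 (g s)" using opt s(2) by blast
    moreover have "f 0 (g s) < f 0 xhat" using s(1) by (auto simp: K_def)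
    ultimately show False by simp
  qed
  obtain mu where mu: "\<forall>k\<in>K. mu k \<ge> 0" "\<exists>k\<in>K. mu k > 0" "\<forall>u. (\<Sum>k\<in>K. mu k * P k u) \<ge> 0"
    using gordan[OF K(1,2), of P] sP K(3) noneg by blast
  have conv: "(\<Sum>i\<le>m. ereal (lam i) * dini_upper_M (f i) xhat u) = ereal (\<Sum>k\<in>K. lam k * P k u)"
    if "\<forall>i. i \<notin> K \<longrightarrow> lam i = 0" for lam u
  proof -
    have "(\<Sum>i\<le>m. ereal (lam i) * dini_upper_M (f i) xhat u) = ereal (\<Sum>i\<le>m. lam i * P i u)"
      by (simp add: DM)
    also have "(\<Sum>i\<le>m. lam i * P i u) = (\<Sum>k\<in>K. lam k * P k u)"
      using K(3) that by (intro sum.mono_neutral_right) auto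
    finally show ?thesis .
  qed
  define lam where "lam i = (if i \<in> K then mu i else 0)" for i
  have lamK: "\<forall>i. i \<notin> K \<longrightarrow> lam i = 0" by (simp add: lam_def)
  have sumK: "(\<Sum>k\<in>K. lam k * P k u) = (\<Sum>k\<in>K. mu k * P k u)" for u
    by (rule sum.cong) (auto simp: lam_def)
  have part1: "(\<forall>i\<le>m. lam i \<ge> 0) \<and> (\<exists>i\<le>m. lam i \<noteq> 0) \<and>
            (\<forall>i\<in>{1..m}. lam i * f i xhat = 0) \<and>
            (\<forall>u. (\<Sum>i\<le>m. ereal (lam i) * dini_upper_M (f i) xhat u) \<ge> 0)"
  proof (intro conjI allI impI ballI)
    show "lam i \<ge> 0" for i using mu(1) by (simp add: lam_def)
    show "\<exists>i\<le>m. lam i \<noteq> 0" using mu(2) K(3) by (force simp: lam_def)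
    show "lam i * f i xhat = 0" if "i \<in> {1..m}" for i
      using that by (auto simp: lam_def K_def A_def)
    show "(\<Sum>i\<le>m. ereal (lam i) * dini_upper_M (f i) xhat u) \<ge> 0" for u
      using conv[OF lamK, of u] sumK[of u] mu(3) by simp
  qed
  have part2: "\<exists>lam :: nat \<Rightarrow> real. lam 0 = 1 \<and>
            (\<forall>i\<le>m. lam i \<ge> 0) \<and> (\<exists>i\<le>m. lam i \<noteq> 0) \<and>
            (\<forall>i\<in>{1..m}. lam i * f i xhat = 0) \<and>
            (\<forall>u. (\<Sum>i\<le>m. ereal (lam i) * dini_upper_M (f i) xhat u) \<ge> 0)"
    if hw: "\<exists>w. \<forall>i\<in>{1..m}. f i xhat = 0 \<longrightarrow> dini_upper_M (f i) xhat w < 0"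
  proof -
    obtain w where w: "\<forall>i\<in>{1..m}. f i xhat = 0 \<longrightarrow> dini_upper_M (f i) xhat w < 0" using hw by blast
    have Pw: "P i w < 0" if "i \<in> A" for i
      using w that DM[of i w] by (auto simp: A_def)
    have mu0: "mu 0 > 0"
    proof (rule ccontr)
      assume "\<not> mu 0 > 0"
      then have m0: "mu 0 = 0" using mu(1) by (auto simp: K_def)
      obtain k where k: "k \<in> K" "mu k > 0" using mu(2) by blast
      then have kA: "k \<in> A" using m0 by (auto simp: K_def)
      have "(\<Sum>k\<in>K. mu k * P k w) = (\<Sum>k\<in>A. mu k * P k w)"
        using m0 by (simp add: K_def A_def)
      also have "\<dots> < (\<Sum>k\<in>A. 0)"
      proof (rule sum_strict_mono_ex1)
        show "finite A" by (simp add: A_def)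
        show "\<forall>x\<in>A. mu x * P x w \<le> 0" proof
          fix x assume x: "x \<in> A"
          then have "mu x \<ge> 0" "P x w < 0" using mu(1) Pw by (auto simp: K_def)
          then show "mu x * P x w \<le> 0" by (simp add: mult_nonneg_nonpos)
        qed
        show "\<exists>a\<in>A. mu a * P a w < 0" using kA k Pw by (auto intro!: mult_pos_neg)
      qed
      finally show False using mu(3) by (simp add: not_le[symmetric])
    qed
    define lam2 where "lam2 i = lam i / mu 0" for i
    have l20: "lam2 0 = 1" using mu0 by (simp add: lam2_def lam_def K_def)
    have lamK2: "\<forall>i. i \<notin> K \<longrightarrow> lam2 i = 0" by (simp add: lam2_def lam_def)
    show ?thesis
    proof (intro exI[of _ lam2] conjI allI impI ballI)
      show "lam2 0 = 1" by (rule l20)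
      show "lam2 i \<ge> 0" for i using mu(1) mu0 by (simp add: lam2_def lam_def)
      show "\<exists>i\<le>m. lam2 i \<noteq> 0" using l20 by (intro exI[of _ 0]) auto
      show "lam2 i * f i xhat = 0" if "i \<in> {1..m}" for i
        using that by (auto simp: lam2_def lam_def K_def A_def)
      show "(\<Sum>i\<le>m. ereal (lam2 i) * dini_upper_M (f i) xhat u) \<ge> 0" for u
      proof -
        have "(\<Sum>k\<in>K. lam2 k * P k u) = (\<Sum>k\<in>K. mu k * P k u) / mu 0"
          by (simp add: lam2_def sum_divide_distrib lam_def)
        also have "\<dots> \<ge> 0" using mu(3) mu0 by simp
        finally show ?thesis using conv[OF lamK2, of u] by simp
      qed
    qed
  qed
  show ?thesis using part1 part2 by blast
qed

end
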